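(* Let $N\ge3$ and suppose $k_m\ge1$ for all $0\le m\le r-1$. Then a function $f$ on $\mathcal{V}_{N,{\bf k}}$ satisfies $L_{N,{\bf k}}f=Nf$ if and only if $Pf=\frac{1}{N-1}f$; that is, the eigenspace of the graph Laplacian $L_{N,{\bf k}}$ for the eigenvalue $N$ coincides with the eigenspace of $P$ for the eigenvalue $1/(N-1)$.
   Context: Fix $N\ge3$, $r\ge2$, distinct reals $e_0,\dots,e_{r-1}$, and ${\bf k}=(k_0,\dots,k_{r-1})$ of nonnegative integers with $\sum_m k_m=N$. The multislice $\mathcal{V}_{N,{\bf k}}$ is the set of $x\in\{e_0,\dots,e_{r-1}\}^N$ with exactly $k_m$ coordinates equal to $e_m$ for each $m$, and $\mu_{N,{\bf k}}$ is the uniform probability measure on it. For $i<j$, $\pi_{i,j}x$ swaps coordinates $i$ and $j$. The graph Laplacian is $L_{N,{\bf k}}f(x)=\sum_{y}(f(x)-f(y))$, the sum over all $y\neq x$ of the form $y=\pi_{i,j}x$. For $1\le\ell\le N$, $P_\ell$ is the orthogonal projection in $L^2(\mu_{N,{\bf k}})$ onto functions depending only on $x_\ell$ (i.e. $P_\ell f(x)$ is the average of $f(y)$ over $y\in\mathcal{V}_{N,{\bf k}}$ with $y_\ell=x_\ell$), and $P=\frac1N\sum_{\ell=1}^N P_\ell$. *)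

theory Defs
  imports Complex_Main "HOL-Library.FuncSet"
begin

text \<open>Coordinates are indexed by 0..N-1 (the paper uses 1..N); configurations are
  extensional functions nat => real, equal to undefined outside {0..<N}.\<close>

definition multislice :: "nat \<Rightarrow> nat \<Rightarrow> (nat \<Rightarrow> real) \<Rightarrow> (nat \<Rightarrow> nat) \<Rightarrow> (nat \<Rightarrow> real) set" where
  "multislice N r e k = {x \<in> {0..<N} \<rightarrow>\<^sub>E e ` {0..<r}.
      \<forall>m<r. card {i \<in> {0..<N}. x i = e m} = k m}"

definition swapc :: "nat \<Rightarrow> nat \<Rightarrow> (nat \<Rightarrow> real) \<Rightarrow> (nat \<Rightarrow> real)" where
  "swapc i j x = x(i := x j, j := x i)"

definition neighbours :: "nat \<Rightarrow> (nat \<Rightarrow> real) \<Rightarrow> (nat \<Rightarrow> real) set" where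
  "neighbours N x = {y. y \<noteq> x \<and> (\<exists>i j. i < j \<and> j < N \<and> y = swapc i j x)}"

definition laplacian :: "nat \<Rightarrow> ((nat \<Rightarrow> real) \<Rightarrow> real) \<Rightarrow> (nat \<Rightarrow> real) \<Rightarrow> real" where
  "laplacian N f x = (\<Sum>y \<in> neighbours N x. f x - f y)"

definition proj1 :: "nat \<Rightarrow> nat \<Rightarrow> (nat \<Rightarrow> real) \<Rightarrow> (nat \<Rightarrow> nat) \<Rightarrow> nat
    \<Rightarrow> ((nat \<Rightarrow> real) \<Rightarrow> real) \<Rightarrow> (nat \<Rightarrow> real) \<Rightarrow> real" where
  "proj1 N r e k l f x =
     (let S = {y \<in> multislice N r e k. y l = x l} in (\<Sum>y\<in>S. f y) / real (card S))"

definition projP :: "nat \<Rightarrow> nat \<Rightarrow> (nat \<Rightarrow> real) \<Rightarrow> (nat \<Rightarrow> nat)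
    \<Rightarrow> ((nat \<Rightarrow> real) \<Rightarrow> real) \<Rightarrow> (nat \<Rightarrow> real) \<Rightarrow> real" where
  "projP N r e k f x = (1 / real N) * (\<Sum>l<N. proj1 N r e k l f x)"

end

theory Submission
  imports Defs
begin


definition MS :: "nat set \<Rightarrow> (nat \<Rightarrow> real) \<Rightarrow> (nat \<Rightarrow> real) set" where
  "MS I x0 = {y. (\<forall>i. i \<notin> I \<longrightarrow> y i = x0 i) \<and> (\<forall>v. card {i\<in>I. y i = v} = card {i\<in>I. x0 i = v})}"

definition tr :: "nat \<Rightarrow> nat \<Rightarrow> nat \<Rightarrow> nat" where
  "tr i j k = (if k = i then j else if k = j then i else k)"

lemma swapc_tr: "swapc i j y k = y (tr i j k)"
  by (simp add: swapc_def tr_def)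

lemma swapc_swapc[simp]: "swapc i j (swapc i j y) = y"
  by (rule ext) (simp add: swapc_def)

lemma MS_refl: "x0 \<in> MS I x0"
  by (simp add: MS_def)

lemma MS_same: "y \<in> MS I x0 \<Longrightarrow> MS I y = MS I x0"
  by (auto simp: MS_def)

lemma MS_vals:
  assumes "finite I" "y \<in> MS I x0" "i \<in> I"
  shows "y i \<in> x0 ` I"
proof -
  have "card {k\<in>I. y k = y i} > 0" using assms by (auto simp: card_gt_0_iff)
  then have "card {k\<in>I. x0 k = y i} > 0" using assms(2) by (simp add: MS_def)
  then obtain k where "k \<in> I" "x0 k = y i" by (auto simp: card_gt_0_iff)
  then show ?thesis by force
qed

lemma MS_finite:
  assumes "finite I"
  shows "finite (MS I x0)"
proof -
  have "inj_on (\<lambda>y. restrict y I) (MS I x0)"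
  proof (rule inj_onI)
    fix y z assume "y \<in> MS I x0" "z \<in> MS I x0" "restrict y I = restrict z I"
    then show "y = z"
      by (auto simp: MS_def fun_eq_iff restrict_def split: if_splits) metis
  qed
  moreover have "(\<lambda>y. restrict y I) ` MS I x0 \<subseteq> I \<rightarrow>\<^sub>E x0 ` I"
    using MS_vals[OF assms] by auto
  moreover have "finite (I \<rightarrow>\<^sub>E x0 ` I)" using assms by (simp add: finite_PiE)
  ultimately show ?thesis
    by (meson finite_imageD finite_subset)
qed

lemma tr_image:
  assumes "i \<in> I" "j \<in> I"
  shows "{k\<in>I. y (tr i j k) = v} = tr i j ` {k\<in>I. y k = v}"
proof -
  have inv: "tr i j (tr i j k) = k" for k by (simp add: tr_def)
  have mem: "k \<in> I \<Longrightarrow> tr i j k \<in> I" for k using assms by (simp add: tr_def)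
  show ?thesis
  proof
    show "{k\<in>I. y (tr i j k) = v} \<subseteq> tr i j ` {k\<in>I. y k = v}"
    proof
      fix k assume "k \<in> {k\<in>I. y (tr i j k) = v}"
      then show "k \<in> tr i j ` {k\<in>I. y k = v}"
        using mem inv by (metis (mono_tags, lifting) image_eqI mem_Collect_eq)
    qed
  next
    show "tr i j ` {k\<in>I. y k = v} \<subseteq> {k\<in>I. y (tr i j k) = v}"
      using mem inv by auto
  qed
qed

lemma inj_tr: "inj (tr i j)"
  by (rule inj_on_inverseI[where g="tr i j"]) (simp add: tr_def)

lemma swap_MS:
  assumes "i \<in> I" "j \<in> I" "y \<in> MS I x0"
  shows "swapc i j y \<in> MS I x0"
proof -
  have "card {k\<in>I. swapc i j y k = v} = card {k\<in>I. y k = v}" for v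
    unfolding swapc_tr tr_image[OF assms(1,2)]
    by (rule card_image) (meson inj_tr inj_on_subset subset_UNIV)
  then show ?thesis using assms by (auto simp: MS_def swapc_def)
qed

lemma sum_swap_inv:
  assumes "i \<in> I" "j \<in> I"
  shows "(\<Sum>x\<in>MS I x0. h (swapc i j x)) = (\<Sum>x\<in>MS I x0. h x)"
  by (rule sum.reindex_bij_witness[where i="swapc i j" and j="swapc i j"])
     (auto intro: swap_MS[OF assms])

lemma cnt_split:
  assumes "finite I" "l \<in> I"
  shows "card {i\<in>I. y i = v} = card {i\<in>I - {l}. y i = v} + (if y l = v then 1 else 0)"
proof -
  have "{i\<in>I. y i = v} = (if y l = v then insert l {i\<in>I - {l}. y i = v} else {i\<in>I - {l}. y i = v})"
    using assms by auto
  then show ?thesis using assms by auto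
qed

lemma fib_MS:
  assumes "finite I" "l \<in> I" "x \<in> MS I x0"
  shows "{y \<in> MS I x0. y l = x l} = MS (I - {l}) x"
proof
  show "{y \<in> MS I x0. y l = x l} \<subseteq> MS (I - {l}) x"
  proof
    fix y assume y: "y \<in> {y \<in> MS I x0. y l = x l}"
    have "card {i\<in>I - {l}. y i = v} = card {i\<in>I - {l}. x i = v}" for v
      using y assms cnt_split[OF assms(1,2), of y v] cnt_split[OF assms(1,2), of x v]
      by (auto simp: MS_def)
    then show "y \<in> MS (I - {l}) x" using y assms by (auto simp: MS_def)
  qed
next
  show "MS (I - {l}) x \<subseteq> {y \<in> MS I x0. y l = x l}"
  proof
    fix y assume y: "y \<in> MS (I - {l}) x"
    then have yl: "y l = x l" by (simp add: MS_def)
    have "card {i\<in>I. y i = v} = card {i\<in>I. x0 i = v}" for v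
      using y assms yl cnt_split[OF assms(1,2), of y v] cnt_split[OF assms(1,2), of x v]
      by (auto simp: MS_def)
    then show "y \<in> {y \<in> MS I x0. y l = x l}" using y assms yl by (auto simp: MS_def)
  qed
qed

lemma K_const:
  fixes \<psi> :: "real \<Rightarrow> real"
  assumes "finite I" "x \<in> MS I x0"
  shows "(\<Sum>c\<in>I. \<psi> (x c)) = (\<Sum>c\<in>I. \<psi> (x0 c))"
proof -
  have g: "(\<Sum>c\<in>I. \<psi> (y c)) = (\<Sum>v\<in>x0 ` I. \<psi> v * card {c\<in>I. y c = v})"
    if "y \<in> MS I x0" for y
  proof -
    have "(\<Sum>c\<in>I. \<psi> (y c)) = (\<Sum>v\<in>x0 ` I. \<Sum>c\<in>{c\<in>I. y c = v}. \<psi> (y c))"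
      by (rule sum.group[symmetric]) (use assms MS_vals[OF assms(1) that] in auto)
    also have "\<dots> = (\<Sum>v\<in>x0 ` I. \<psi> v * card {c\<in>I. y c = v})"
      by (rule sum.cong) auto
    finally show ?thesis .
  qed
  show ?thesis using g[OF assms(2)] g[OF MS_refl] assms(2) by (simp add: MS_def)
qed



definition FL :: "(nat\<Rightarrow>real) set \<Rightarrow> nat \<Rightarrow> ((nat\<Rightarrow>real)\<Rightarrow>real) \<Rightarrow> real \<Rightarrow> real" where
  "FL X l u v = (\<Sum>y\<in>{y\<in>X. y l = v}. u y) / card {y\<in>X. y l = v}"

definition PL :: "(nat\<Rightarrow>real) set \<Rightarrow> nat \<Rightarrow> ((nat\<Rightarrow>real)\<Rightarrow>real) \<Rightarrow> (nat\<Rightarrow>real) \<Rightarrow> real" where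
  "PL X l u x = FL X l u (x l)"

definition OP :: "nat set \<Rightarrow> (nat \<times> nat) set" where
  "OP I = {(i,j). i \<in> I \<and> j \<in> I \<and> i \<noteq> j}"

definition DD :: "nat set \<Rightarrow> (nat\<Rightarrow>real) set \<Rightarrow> ((nat\<Rightarrow>real)\<Rightarrow>real) \<Rightarrow> real" where
  "DD I X u = (\<Sum>x\<in>X. \<Sum>p\<in>OP I. (u x - u (swapc (fst p) (snd p) x))^2)"

definition VV :: "(nat\<Rightarrow>real) set \<Rightarrow> ((nat\<Rightarrow>real)\<Rightarrow>real) \<Rightarrow> real" where
  "VV X u = (\<Sum>x\<in>X. (u x - (\<Sum>z\<in>X. u z) / card X)^2)"

lemma finite_OP: "finite I \<Longrightarrow> finite (OP I)"
  by (rule finite_subset[of _ "I \<times> I"]) (auto simp: OP_def)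

lemma tower:
  assumes "finite X"
  shows "(\<Sum>x\<in>X. PL X l h x) = (\<Sum>x\<in>X. h x)"
proof -
  let ?c = "\<lambda>v. real (card {z\<in>X. z l = v})"
  have "PL X l h x = (\<Sum>y\<in>X. if y l = x l then h y / ?c (y l) else 0)" for x
  proof -
    have "PL X l h x = (\<Sum>y\<in>{y\<in>X. y l = x l}. h y / ?c (x l))"
      by (simp add: PL_def FL_def sum_divide_distrib)
    also have "\<dots> = (\<Sum>y\<in>X. if y l = x l then h y / ?c (x l) else 0)"
      using assms by (simp add: sum.inter_filter)
    also have "\<dots> = (\<Sum>y\<in>X. if y l = x l then h y / ?c (y l) else 0)"
      by (rule sum.cong) auto
    finally show ?thesis .
  qed
  then have "(\<Sum>x\<in>X. PL X l h x) = (\<Sum>x\<in>X. \<Sum>y\<in>X. if y l = x l then h y / ?c (y l) else 0)"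
    by simp
  also have "\<dots> = (\<Sum>y\<in>X. \<Sum>x\<in>X. if y l = x l then h y / ?c (y l) else 0)"
    by (rule sum.swap)
  also have "\<dots> = (\<Sum>y\<in>X. h y)"
  proof (rule sum.cong)
    fix y assume y: "y \<in> X"
    have "(\<Sum>x\<in>X. if y l = x l then h y / ?c (y l) else 0) = (\<Sum>x\<in>{x\<in>X. x l = y l}. h y / ?c (y l))"
      by (subst sum.inter_filter[OF assms]) (rule sum.cong, auto)
    also have "\<dots> = h y"
    proof -
      have "?c (y l) > 0" using y assms by (auto simp: card_gt_0_iff)
      then show ?thesis by simp
    qed
    finally show "(\<Sum>x\<in>X. if y l = x l then h y / ?c (y l) else 0) = h y" .
  qed simp
  finally show ?thesis .
qed

lemma PL_mult:
  "PL X l (\<lambda>y. h y * PL X l u y) x = PL X l h x * PL X l u x"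
proof -
  have "(\<Sum>y\<in>{y\<in>X. y l = x l}. h y * PL X l u y) = (\<Sum>y\<in>{y\<in>X. y l = x l}. h y * PL X l u x)"
    by (rule sum.cong) (auto simp: PL_def)
  then show ?thesis by (simp add: PL_def[of X l "\<lambda>y. h y * PL X l u y"] FL_def flip: sum_distrib_right)
     (simp add: PL_def FL_def)
qed

lemma sum_u_PL:
  assumes "finite X"
  shows "(\<Sum>x\<in>X. u x * PL X l u x) = (\<Sum>x\<in>X. (PL X l u x)^2)"
  using tower[OF assms, of l "\<lambda>y. u y * PL X l u y"] PL_mult[of X l "u" u]
  by (simp add: power2_eq_square)

lemma sum_sq_diff_PL:
  assumes "finite X"
  shows "(\<Sum>x\<in>X. (u x - PL X l u x)^2) = (\<Sum>x\<in>X. (u x)^2) - (\<Sum>x\<in>X. (PL X l u x)^2)"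
proof -
  have "(\<Sum>x\<in>X. (u x - PL X l u x)^2) = (\<Sum>x\<in>X. (u x)^2 - 2 * (u x * PL X l u x) + (PL X l u x)^2)"
    by (rule sum.cong) (auto simp: power2_eq_square algebra_simps)
  also have "\<dots> = (\<Sum>x\<in>X. (u x)^2) - 2 * (\<Sum>x\<in>X. u x * PL X l u x) + (\<Sum>x\<in>X. (PL X l u x)^2)"
    by (simp add: sum.distrib sum_subtractf sum_distrib_left)
  finally show ?thesis using sum_u_PL[OF assms] by simp
qed

lemma OP_minus: "OP (I - {l}) = {p \<in> OP I. fst p \<noteq> l \<and> snd p \<noteq> l}"
  by (auto simp: OP_def)

lemma DD_count:
  assumes "finite I" "X = MS I x0"
  shows "(\<Sum>l\<in>I. DD (I - {l}) X u) = (real (card I) - 2) * DD I X u"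
proof -
  let ?s = "\<lambda>x p. (u x - u (swapc (fst p) (snd p) x))^2"
  have fX: "finite X" using assms MS_finite by simp
  have "DD (I - {l}) X u = (\<Sum>x\<in>X. \<Sum>p\<in>OP I. if fst p \<noteq> l \<and> snd p \<noteq> l then ?s x p else 0)" for l
    unfolding DD_def OP_minus using finite_OP[OF assms(1)] by (simp add: sum.inter_filter)
  then have "(\<Sum>l\<in>I. DD (I - {l}) X u) = (\<Sum>l\<in>I. \<Sum>x\<in>X. \<Sum>p\<in>OP I. if fst p \<noteq> l \<and> snd p \<noteq> l then ?s x p else 0)"
    by simp
  also have "\<dots> = (\<Sum>x\<in>X. \<Sum>l\<in>I. \<Sum>p\<in>OP I. if fst p \<noteq> l \<and> snd p \<noteq> l then ?s x p else 0)"
    by (rule sum.swap)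
  also have "\<dots> = (\<Sum>x\<in>X. \<Sum>p\<in>OP I. \<Sum>l\<in>I. if fst p \<noteq> l \<and> snd p \<noteq> l then ?s x p else 0)"
    by (rule sum.cong[OF refl], rule sum.swap)
  also have "\<dots> = (\<Sum>x\<in>X. \<Sum>p\<in>OP I. (real (card I) - 2) * ?s x p)"
  proof (intro sum.cong refl)
    fix x p assume p: "p \<in> OP I"
    have "(\<Sum>l\<in>I. if fst p \<noteq> l \<and> snd p \<noteq> l then ?s x p else 0) = (\<Sum>l\<in>{l\<in>I. fst p \<noteq> l \<and> snd p \<noteq> l}. ?s x p)"
      by (subst sum.inter_filter[OF assms(1)]) simp
    also have "{l\<in>I. fst p \<noteq> l \<and> snd p \<noteq> l} = I - {fst p, snd p}" by auto
    also have "(\<Sum>l\<in>I - {fst p, snd p}. ?s x p) = real (card (I - {fst p, snd p})) * ?s x p" by simp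
    also have "card (I - {fst p, snd p}) = card I - 2"
      using p assms(1) by (auto simp: OP_def card_Diff_subset)
    also have "real (card I - 2) = real (card I) - 2"
    proof -
      have "card {fst p, snd p} \<le> card I" using p assms(1) by (intro card_mono) (auto simp: OP_def)
      moreover have "card {fst p, snd p} = 2" using p by (auto simp: OP_def)
      ultimately show ?thesis by simp
    qed
    finally show "(\<Sum>l\<in>I. if fst p \<noteq> l \<and> snd p \<noteq> l then ?s x p else 0) = (real (card I) - 2) * ?s x p" .
  qed
  also have "\<dots> = (real (card I) - 2) * DD I X u"
    by (simp add: DD_def sum_distrib_left)
  finally show ?thesis .
qed



definition gapP :: "nat set \<Rightarrow> (nat\<Rightarrow>real) \<Rightarrow> ((nat\<Rightarrow>real)\<Rightarrow>real) \<Rightarrow> bool" where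
  "gapP J y u \<longleftrightarrow> 4 * real (card J) * VV (MS J y) u \<le> DD J (MS J y) u"

lemma fiber_ineq:
  assumes "finite I" "l \<in> I" "X = MS I x0"
    and IH: "\<forall>x\<in>X. gapP (I - {l}) x u"
  shows "4 * (real (card I) - 1) * (\<Sum>x\<in>X. (u x - PL X l u x)^2) \<le> DD (I - {l}) X u"
proof -
  define q where "q x = (\<Sum>p\<in>OP (I - {l}). (u x - u (swapc (fst p) (snd p) x))^2)" for x
  define r where "r y = (u y - PL X l u y)^2" for y
  have fX: "finite X" using assms MS_finite by simp
  have cI: "real (card (I - {l})) = real (card I) - 1"
    using assms(1,2) by (simp add: of_nat_diff) (metis One_nat_def Suc_leI card_gt_0_iff empty_iff of_nat_1 of_nat_diff)
  have pt: "4 * (real (card I) - 1) * PL X l r x \<le> PL X l q x" if x: "x \<in> X" for x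
  proof -
    define F where "F = {y\<in>X. y l = x l}"
    have FMS: "F = MS (I - {l}) x" using fib_MS[OF assms(1,2)] x assms(3) by (simp add: F_def)
    have cF: "real (card F) > 0" using x fX by (auto simp: F_def card_gt_0_iff)
    have avgF: "(\<Sum>z\<in>F. u z) / card F = PL X l u x" by (simp add: PL_def FL_def F_def)
    have VVF: "VV F u = (\<Sum>y\<in>F. r y)"
      unfolding VV_def avgF r_def by (rule sum.cong) (auto simp: F_def PL_def)
    have "4 * real (card (I - {l})) * VV F u \<le> DD (I - {l}) F u"
      using IH x FMS by (simp add: gapP_def)
    then have "4 * (real (card I) - 1) * (\<Sum>y\<in>F. r y) \<le> (\<Sum>y\<in>F. q y)"
      using cI VVF by (simp add: DD_def q_def)
    then have "4 * (real (card I) - 1) * (\<Sum>y\<in>F. r y) / card F \<le> (\<Sum>y\<in>F. q y) / card F"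
      using cF by (simp add: divide_right_mono)
    then show ?thesis by (simp add: PL_def FL_def F_def)
  qed
  have "4 * (real (card I) - 1) * (\<Sum>x\<in>X. (u x - PL X l u x)^2) = (\<Sum>x\<in>X. 4 * (real (card I) - 1) * PL X l r x)"
  proof -
    have "(\<Sum>x\<in>X. PL X l r x) = (\<Sum>x\<in>X. (u x - PL X l u x)^2)"
      by (simp add: tower[OF fX] r_def)
    then show ?thesis by (simp add: sum_distrib_left[symmetric])
  qed
  also have "\<dots> \<le> (\<Sum>x\<in>X. PL X l q x)" by (rule sum_mono) (use pt in auto)
  also have "\<dots> = DD (I - {l}) X u" by (simp add: tower[OF fX] DD_def q_def)
  finally show ?thesis .
qed

lemma coord_move:
  assumes "a \<in> I" "b \<in> I"
  shows "(\<Sum>x\<in>MS I x0. \<Psi> (x a)) = (\<Sum>x\<in>MS I x0. \<Psi> (x b))"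
proof -
  have "(\<Sum>x\<in>MS I x0. \<Psi> (swapc a b x b)) = (\<Sum>x\<in>MS I x0. \<Psi> (x b))"
    by (rule sum_swap_inv[OF assms])
  moreover have "swapc a b x b = x a" for x by (simp add: swapc_def)
  ultimately show ?thesis by simp
qed

lemma coord_move2:
  assumes "a \<in> I" "b \<in> I" "c \<in> I" "b \<noteq> a" "c \<noteq> a"
  shows "(\<Sum>x\<in>MS I x0. \<Psi> (x a) (x b)) = (\<Sum>x\<in>MS I x0. \<Psi> (x a) (x c))"
proof -
  have "(\<Sum>x\<in>MS I x0. \<Psi> (swapc b c x a) (swapc b c x c)) = (\<Sum>x\<in>MS I x0. \<Psi> (x a) (x c))"
    by (rule sum_swap_inv[OF assms(2,3)])
  moreover have "swapc b c x c = x b" "swapc b c x a = x a" for x using assms by (auto simp: swapc_def)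
  ultimately show ?thesis by simp
qed



lemma cross_term:
  assumes "finite I" "X = MS I x0" "(\<Sum>x\<in>X. u x) = 0"
    and "l \<in> I" "l' \<in> I" "l \<noteq> l'"
  shows "(real (card I) - 1) * (\<Sum>x\<in>X. PL X l u x * PL X l' u x)
         = - (\<Sum>x\<in>X. FL X l u (x l) * FL X l' u (x l))"
proof -
  let ?F = "FL X l u" and ?G = "FL X l' u"
  have fX: "finite X" using assms MS_finite by simp
  let ?M = "\<Sum>x\<in>X. ?F (x l) * ?G (x l')"
  have eqc: "(\<Sum>x\<in>X. ?F (x l) * ?G (x c)) = ?M" if "c \<in> I - {l}" for c
    using coord_move2[of l I l' c, where \<Psi>="\<lambda>a b. ?F a * ?G b"] that assms by auto
  have cI: "real (card (I - {l})) = real (card I) - 1"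
    using assms(1,4) by (simp add: of_nat_diff) (metis One_nat_def Suc_leI card_gt_0_iff empty_iff of_nat_1 of_nat_diff)
  define K where "K = (\<Sum>c\<in>I. ?G (x0 c))"
  have Kx: "(\<Sum>c\<in>I - {l}. ?G (x c)) = K - ?G (x l)" if "x \<in> X" for x
  proof -
    have "(\<Sum>c\<in>I. ?G (x c)) = ?G (x l) + (\<Sum>c\<in>I - {l}. ?G (x c))"
      using assms(1,4) by (rule sum.remove)
    then show ?thesis using K_const[OF assms(1), of x x0 ?G] that assms(2) K_def by simp
  qed
  have "(real (card I) - 1) * ?M = (\<Sum>c\<in>I - {l}. ?M)" using cI by simp
  also have "\<dots> = (\<Sum>c\<in>I - {l}. \<Sum>x\<in>X. ?F (x l) * ?G (x c))"
    by (rule sum.cong) (use eqc in auto)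
  also have "\<dots> = (\<Sum>x\<in>X. \<Sum>c\<in>I - {l}. ?F (x l) * ?G (x c))" by (rule sum.swap)
  also have "\<dots> = (\<Sum>x\<in>X. ?F (x l) * (K - ?G (x l)))"
    by (rule sum.cong) (auto simp: sum_distrib_left[symmetric] Kx)
  also have "\<dots> = K * (\<Sum>x\<in>X. ?F (x l)) - (\<Sum>x\<in>X. ?F (x l) * ?G (x l))"
    by (simp add: algebra_simps sum_subtractf sum_distrib_left)
  also have "(\<Sum>x\<in>X. ?F (x l)) = 0"
    using tower[OF fX, of l u] assms(3) by (simp add: PL_def)
  finally show ?thesis by (simp add: PL_def)
qed

lemma gram:
  assumes "finite I" "card I \<ge> 2" "X = MS I x0" "(\<Sum>x\<in>X. u x) = 0"
  shows "(\<Sum>x\<in>X. u x * (\<Sum>l\<in>I. PL X l u x)) = (\<Sum>l\<in>I. \<Sum>x\<in>X. (PL X l u x)^2)"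
    and "(\<Sum>x\<in>X. (\<Sum>l\<in>I. PL X l u x)^2)
           \<le> real (card I) / (real (card I) - 1) * (\<Sum>l\<in>I. \<Sum>x\<in>X. (PL X l u x)^2)"
proof -
  have fX: "finite X" using assms MS_finite by simp
  show "(\<Sum>x\<in>X. u x * (\<Sum>l\<in>I. PL X l u x)) = (\<Sum>l\<in>I. \<Sum>x\<in>X. (PL X l u x)^2)"
  proof -
    have "(\<Sum>x\<in>X. u x * (\<Sum>l\<in>I. PL X l u x)) = (\<Sum>x\<in>X. \<Sum>l\<in>I. u x * PL X l u x)"
      by (simp add: sum_distrib_left)
    also have "\<dots> = (\<Sum>l\<in>I. \<Sum>x\<in>X. u x * PL X l u x)" by (rule sum.swap)
    finally show ?thesis by (simp add: sum_u_PL[OF fX])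
  qed
next
  have fX: "finite X" using assms MS_finite by simp
  obtain a0 where a0: "a0 \<in> I" using assms(2) by fastforce
  define n where "n = real (card I)"
  have n1: "n - 1 > 0" using assms(2) by (simp add: n_def)
  define B where "B l l' = (\<Sum>x\<in>X. FL X l u (x a0) * FL X l' u (x a0))" for l l'
  define E where "E l l' = (\<Sum>x\<in>X. PL X l u x * PL X l' u x)" for l l'
  have Ef: "E l l' = n / (n - 1) * (if l = l' then B l l else 0) - B l l' / (n - 1)"
    if "l \<in> I" "l' \<in> I" for l l'
  proof (cases "l = l'")
    case True
    have "E l l = B l l"
      unfolding E_def B_def PL_def using coord_move[OF that(1) a0, where \<Psi>="\<lambda>v. FL X l u v * FL X l u v"] assms(3)
      by simp
    have "n / (n - 1) * B l l - B l l / (n - 1) = (n * B l l - B l l) / (n - 1)"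
      by (simp add: diff_divide_distrib)
    also have "n * B l l - B l l = (n - 1) * B l l" by (simp add: algebra_simps)
    also have "(n - 1) * B l l / (n - 1) = B l l" using n1 by simp
    finally show ?thesis using True \<open>E l l = B l l\<close> by simp
  next
    case False
    have "(n - 1) * E l l' = - B l l'"
      using cross_term[OF assms(1,3,4) that False] coord_move[OF that(1) a0, where \<Psi>="\<lambda>v. FL X l u v * FL X l' u v"] assms(3)
      by (simp add: E_def B_def n_def)
    then show ?thesis using False n1 by (simp add: field_simps)
  qed
  have "(\<Sum>x\<in>X. (\<Sum>l\<in>I. PL X l u x)^2) = (\<Sum>l\<in>I. \<Sum>l'\<in>I. E l l')"
  proof -
    have "(\<Sum>x\<in>X. (\<Sum>l\<in>I. PL X l u x)^2) = (\<Sum>x\<in>X. \<Sum>l\<in>I. \<Sum>l'\<in>I. PL X l u x * PL X l' u x)"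
      by (simp add: power2_eq_square sum_product)
    also have "\<dots> = (\<Sum>l\<in>I. \<Sum>x\<in>X. \<Sum>l'\<in>I. PL X l u x * PL X l' u x)" by (rule sum.swap)
    also have "\<dots> = (\<Sum>l\<in>I. \<Sum>l'\<in>I. E l l')"
      unfolding E_def by (rule sum.cong[OF refl], rule sum.swap)
    finally show ?thesis .
  qed
  also have "\<dots> = (\<Sum>l\<in>I. \<Sum>l'\<in>I. n / (n - 1) * (if l = l' then B l l else 0) - B l l' / (n - 1))"
    by (rule sum.cong[OF refl], rule sum.cong[OF refl]) (simp add: Ef)
  also have "\<dots> = (\<Sum>l\<in>I. n / (n - 1) * B l l - (\<Sum>l'\<in>I. B l l') / (n - 1))"
  proof (rule sum.cong[OF refl])
    fix l assume l: "l \<in> I"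
    have "(\<Sum>l'\<in>I. n / (n - 1) * (if l = l' then B l l else 0) - B l l' / (n - 1))
       = (\<Sum>l'\<in>I. if l = l' then n / (n - 1) * B l l else 0) - (\<Sum>l'\<in>I. B l l' / (n - 1))"
      by (simp add: sum_subtractf[symmetric]) (rule sum.cong, auto)
    also have "(\<Sum>l'\<in>I. if l = l' then n / (n - 1) * B l l else 0) = n / (n - 1) * B l l"
      using assms(1) l by simp
    finally show "(\<Sum>l'\<in>I. n / (n - 1) * (if l = l' then B l l else 0) - B l l' / (n - 1))
       = n / (n - 1) * B l l - (\<Sum>l'\<in>I. B l l') / (n - 1)" by (simp add: sum_divide_distrib)
  qed
  also have "\<dots> = n / (n - 1) * (\<Sum>l\<in>I. B l l) - (\<Sum>l\<in>I. \<Sum>l'\<in>I. B l l') / (n - 1)"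
    by (simp add: sum_subtractf sum_distrib_left sum_divide_distrib)
  also have "\<dots> \<le> n / (n - 1) * (\<Sum>l\<in>I. B l l)"
  proof -
    have "(\<Sum>l\<in>I. \<Sum>l'\<in>I. B l l') = (\<Sum>x\<in>X. (\<Sum>l\<in>I. FL X l u (x a0))^2)"
    proof -
      have "(\<Sum>x\<in>X. (\<Sum>l\<in>I. FL X l u (x a0))^2) = (\<Sum>x\<in>X. \<Sum>l\<in>I. \<Sum>l'\<in>I. FL X l u (x a0) * FL X l' u (x a0))"
        by (simp add: power2_eq_square sum_product)
      also have "\<dots> = (\<Sum>l\<in>I. \<Sum>x\<in>X. \<Sum>l'\<in>I. FL X l u (x a0) * FL X l' u (x a0))" by (rule sum.swap)
      also have "\<dots> = (\<Sum>l\<in>I. \<Sum>l'\<in>I. B l l')"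
        unfolding B_def by (rule sum.cong[OF refl], rule sum.swap)
      finally show ?thesis by simp
    qed
    then have "(\<Sum>l\<in>I. \<Sum>l'\<in>I. B l l') \<ge> 0" by (simp add: sum_nonneg)
    then show ?thesis using n1 by simp
  qed
  also have "(\<Sum>l\<in>I. B l l) = (\<Sum>l\<in>I. \<Sum>x\<in>X. (PL X l u x)^2)"
  proof (rule sum.cong[OF refl])
    fix l assume "l \<in> I"
    then show "B l l = (\<Sum>x\<in>X. (PL X l u x)^2)"
      using coord_move[OF \<open>l \<in> I\<close> a0, where \<Psi>="\<lambda>v. (FL X l u v)^2"] assms(3)
      by (simp add: B_def PL_def power2_eq_square)
  qed
  finally show "(\<Sum>x\<in>X. (\<Sum>l\<in>I. PL X l u x)^2)
           \<le> real (card I) / (real (card I) - 1) * (\<Sum>l\<in>I. \<Sum>x\<in>X. (PL X l u x)^2)"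
    by (simp add: n_def)
qed



lemma core_step:
  assumes "finite I" "X = MS I x0"
    and IH: "\<forall>l\<in>I. \<forall>x\<in>X. gapP (I - {l}) x u"
  shows "4 * (real (card I) - 1) * (real (card I) * (\<Sum>x\<in>X. (u x)^2) - (\<Sum>l\<in>I. \<Sum>x\<in>X. (PL X l u x)^2))
         \<le> (real (card I) - 2) * DD I X u"
proof -
  have fX: "finite X" using assms MS_finite by simp
  have "4 * (real (card I) - 1) * (real (card I) * (\<Sum>x\<in>X. (u x)^2) - (\<Sum>l\<in>I. \<Sum>x\<in>X. (PL X l u x)^2))
      = (\<Sum>l\<in>I. 4 * (real (card I) - 1) * (\<Sum>x\<in>X. (u x - PL X l u x)^2))"
  proof -
    have "(\<Sum>l\<in>I. 4 * (real (card I) - 1) * (\<Sum>x\<in>X. (u x - PL X l u x)^2))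
        = 4 * (real (card I) - 1) * (\<Sum>l\<in>I. (\<Sum>x\<in>X. (u x)^2) - (\<Sum>x\<in>X. (PL X l u x)^2))"
      by (simp add: sum_sq_diff_PL[OF fX] sum_distrib_left)
    also have "(\<Sum>l\<in>I. (\<Sum>x\<in>X. (u x)^2) - (\<Sum>x\<in>X. (PL X l u x)^2))
        = real (card I) * (\<Sum>x\<in>X. (u x)^2) - (\<Sum>l\<in>I. \<Sum>x\<in>X. (PL X l u x)^2)"
      by (simp add: sum_subtractf)
    finally show ?thesis by simp
  qed
  also have "\<dots> \<le> (\<Sum>l\<in>I. DD (I - {l}) X u)"
    by (rule sum_mono) (use fiber_ineq[OF assms(1) _ assms(2)] IH in auto)
  also have "\<dots> = (real (card I) - 2) * DD I X u" by (rule DD_count[OF assms(1,2)])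
  finally show ?thesis .
qed

lemma quad_expand:
  fixes g w :: "'a \<Rightarrow> real" and c :: real
  shows  "(\<Sum>x\<in>X. (g x - c * w x)^2) = (\<Sum>x\<in>X. (g x)^2) - 2 * c * (\<Sum>x\<in>X. w x * g x) + c^2 * (\<Sum>x\<in>X. (w x)^2)"
proof -
  have "(\<Sum>x\<in>X. (g x - c * w x)^2) = (\<Sum>x\<in>X. (g x)^2 - 2 * c * (w x * g x) + c^2 * (w x)^2)"
    by (rule sum.cong) (auto simp: power2_eq_square algebra_simps)
  then show ?thesis by (simp add: sum.distrib sum_subtractf sum_distrib_left)
qed

lemma S_bound:
  fixes U S G c :: real
  assumes "c > 0" "G \<le> c * S" "0 \<le> G - 2 * c * S + c^2 * U"
  shows "S \<le> c * U"
proof -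
  have "2 * c * S \<le> c * S + c^2 * U" using assms by linarith
  then have "c * S \<le> c * (c * U)" by (simp add: power2_eq_square algebra_simps)
  then show ?thesis using assms(1) by simp
qed

lemma base2:
  assumes "finite I" "card I = 2"
  shows "gapP I x0 u"
proof -
  obtain a b where ab: "I = {a, b}" "a \<noteq> b" using assms(2) by (meson card_2_iff)
  define x1 where "x1 = swapc a b x0"
  have cnt: "card {i\<in>{a,b}. y i = v} = (if y a = v then 1 else 0) + (if y b = v then 1 else 0)" for y :: "nat \<Rightarrow> real" and v
  proof (cases "y a = v"; cases "y b = v")
    assume "y a = v" "y b = v" then have "{i\<in>{a,b}. y i = v} = {a,b}" by auto
    then show ?thesis using ab(2) \<open>y a = v\<close> \<open>y b = v\<close> by simp
  next
    assume "y a = v" "y b \<noteq> v" then have "{i\<in>{a,b}. y i = v} = {a}" by auto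
    then show ?thesis using \<open>y a = v\<close> \<open>y b \<noteq> v\<close> by simp
  next
    assume "y a \<noteq> v" "y b = v" then have "{i\<in>{a,b}. y i = v} = {b}" by auto
    then show ?thesis using \<open>y a \<noteq> v\<close> \<open>y b = v\<close> by simp
  next
    assume "y a \<noteq> v" "y b \<noteq> v" then have "{i\<in>{a,b}. y i = v} = {}" by auto
    then show ?thesis using \<open>y a \<noteq> v\<close> \<open>y b \<noteq> v\<close> by simp
  qed
  have Xeq: "MS I x0 = {x0, x1}"
  proof
    show "MS I x0 \<subseteq> {x0, x1}"
    proof
      fix y assume y: "y \<in> MS I x0"
      have out: "\<forall>i. i \<notin> {a,b} \<longrightarrow> y i = x0 i" using y ab by (simp add: MS_def)
      have c: "\<forall>v. (if y a = v then 1 else 0) + (if y b = v then 1 else (0::nat)) =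
                   (if x0 a = v then 1 else 0) + (if x0 b = v then 1 else 0)"
      proof
        fix v
        have "card {i\<in>I. y i = v} = card {i\<in>I. x0 i = v}" using y by (simp add: MS_def)
        then show "(if y a = v then 1 else 0) + (if y b = v then 1 else (0::nat)) =
                   (if x0 a = v then 1 else 0) + (if x0 b = v then 1 else 0)"
          using cnt[of y v] cnt[of x0 v] ab(1) by simp
      qed
      note c1 = c[rule_format, of "y a"] and c2 = c[rule_format, of "y b"] and c3 = c[rule_format, of "x0 a"]
        and c4 = c[rule_format, of "x0 b"]
      have "(y a = x0 a \<and> y b = x0 b) \<or> (y a = x0 b \<and> y b = x0 a)"
      proof (cases "y a = x0 a")
        case T1: True
        show ?thesis
        proof (cases "y b = x0 a")
          case True
          then have "x0 b = x0 a" using c3 T1 by (simp split: if_splits)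
          then show ?thesis using T1 True by simp
        next
          case False
          then have "x0 b = y b" using c2 T1 by (simp split: if_splits)
          then show ?thesis using T1 by simp
        qed
      next
        case F1: False
        then have "x0 b = y a" "y b \<noteq> y a" using c1 by (simp_all split: if_splits)
        then have "y b = x0 a" using c3 F1 by (simp split: if_splits)
        then show ?thesis using \<open>x0 b = y a\<close> by simp
      qed
      then show "y \<in> {x0, x1}"
      proof
        assume "y a = x0 a \<and> y b = x0 b"
        then have "y = x0" using out by (intro ext) auto
        then show ?thesis by simp
      next
        assume "y a = x0 b \<and> y b = x0 a"
        then have "y = x1" using out ab by (intro ext) (auto simp: x1_def swapc_def)
        then show ?thesis by simp
      qed
    qed
  next
    show "{x0, x1} \<subseteq> MS I x0" using MS_refl swap_MS ab by (auto simp: x1_def)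
  qed
  have OPeq: "OP I = {(a,b), (b,a)}" using ab by (auto simp: OP_def)
  have sw: "swapc b a = swapc a b" by (rule ext)+ (simp add: swapc_def)
  have x10: "swapc a b x1 = x0" by (simp add: x1_def)
  show ?thesis
  proof (cases "x1 = x0")
    case True
    then have "MS I x0 = {x0}" using Xeq by simp
    then show ?thesis by (simp add: gapP_def VV_def DD_def OPeq sw True[unfolded x1_def] sum_nonneg)
  next
    case False
    have DDv: "DD I (MS I x0) u = 4 * (u x0 - u x1)^2"
      using False ab(2) by (simp add: DD_def Xeq OPeq sw x10 x1_def[symmetric] power2_commute)
    have VVv: "VV (MS I x0) u = (u x0 - u x1)^2 / 2"
      using False by (simp add: VV_def Xeq power2_eq_square field_simps)
    show ?thesis using assms(2) by (simp add: gapP_def DDv VVv)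
  qed
qed


lemma DD_shift: "DD I X (\<lambda>x. u x - m) = DD I X u"
  by (simp add: DD_def)

lemma gap_ind:
  assumes "2 \<le> n"
  shows "\<forall>I x0 u. finite I \<and> card I = n \<longrightarrow> gapP I x0 u"
  using assms
proof (induction n rule: nat_induct_at_least)
  case base then show ?case using base2 by blast
next
  case (Suc n)
  show ?case
  proof (intro allI impI)
    fix I :: "nat set" and x0 and u :: "(nat \<Rightarrow> real) \<Rightarrow> real"
    assume I: "finite I \<and> card I = Suc n"
    define X where "X = MS I x0"
    define m where "m = (\<Sum>z\<in>X. u z) / card X"
    define w where "w x = u x - m" for x
    define N where "N = real (card I)"
    have N3: "N \<ge> 3" using Suc.hyps I by (simp add: N_def)
    have fX: "finite X" using I MS_finite X_def by simp
    have cX: "real (card X) > 0" using fX MS_refl[of x0 I] X_def by (auto simp: card_gt_0_iff)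
    have sw: "(\<Sum>x\<in>X. w x) = 0"
      using cX by (simp add: w_def sum_subtractf m_def)
    have IHw: "\<forall>l\<in>I. \<forall>x\<in>X. gapP (I - {l}) x w"
    proof (intro ballI)
      fix l x assume "l \<in> I" "x \<in> X"
      then have "finite (I - {l}) \<and> card (I - {l}) = n" using I by simp
      then show "gapP (I - {l}) x w" using Suc.IH by blast
    qed
    define U where "U = (\<Sum>x\<in>X. (w x)^2)"
    define S where "S = (\<Sum>l\<in>I. \<Sum>x\<in>X. (PL X l w x)^2)"
    define G where "G = (\<Sum>x\<in>X. (\<Sum>l\<in>I. PL X l w x)^2)"
    define c where "c = N / (N - 1)"
    have c0: "c > 0" using N3 by (simp add: c_def)
    have core: "4 * (N - 1) * (N * U - S) \<le> (N - 2) * DD I X w"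
      using core_step[OF conjunct1[OF I] X_def IHw] by (simp add: N_def U_def S_def)
    have g1: "(\<Sum>x\<in>X. w x * (\<Sum>l\<in>I. PL X l w x)) = S"
      using gram(1)[OF conjunct1[OF I] _ X_def sw] Suc.hyps I by (simp add: S_def)
    have g2: "G \<le> c * S"
      using gram(2)[OF conjunct1[OF I] _ X_def sw] Suc.hyps I by (simp add: S_def G_def c_def N_def)
    have "0 \<le> (\<Sum>x\<in>X. ((\<Sum>l\<in>I. PL X l w x) - c * w x)^2)" by (rule sum_nonneg) simp
    then have "0 \<le> G - 2 * c * S + c^2 * U"
      unfolding quad_expand G_def U_def using g1 by simp
    then have SU: "S \<le> c * U" using S_bound c0 g2 by blast
    have "4 * (N - 1) * (N * U - c * U) \<le> 4 * (N - 1) * (N * U - S)"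
      using SU N3 by (intro mult_left_mono) auto
    also have "4 * (N - 1) * (N * U - c * U) = (N - 2) * (4 * N * U)"
      using N3 by (simp add: c_def field_simps)
    finally have "(N - 2) * (4 * N * U) \<le> (N - 2) * DD I X w" using core by linarith
    then have "4 * N * U \<le> DD I X w" using N3 by simp
    moreover have "DD I X w = DD I X u" unfolding w_def by (rule DD_shift)
    moreover have "VV X u = U" by (simp add: VV_def U_def w_def m_def)
    ultimately show "gapP I x0 u" by (simp add: gapP_def X_def[symmetric] N_def)
  qed
qed

lemma gap:
  assumes "finite I" "card I \<ge> 2"
  shows "gapP I x0 u"
  using gap_ind[OF assms(2)] assms(1) by blast



abbreviation sw :: "nat \<times> nat \<Rightarrow> (nat \<Rightarrow> real) \<Rightarrow> (nat \<Rightarrow> real)" where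
  "sw p \<equiv> swapc (fst p) (snd p)"

lemma sym_sum:
  assumes "finite I" "X = MS I x0"
  shows "(\<Sum>x\<in>X. f x * (\<Sum>p\<in>OP I. f x - f (sw p x))) = DD I X f / 2"
proof -
  have fX: "finite X" using assms MS_finite by simp
  have one: "(\<Sum>x\<in>X. f x * (f x - f (sw p x))) = (\<Sum>x\<in>X. (f x - f (sw p x))^2) / 2"
    if p: "p \<in> OP I" for p
  proof -
    have "(\<Sum>x\<in>X. f (sw p x) * (f (sw p x) - f (sw p (sw p x)))) = (\<Sum>x\<in>X. f x * (f x - f (sw p x)))"
      using sum_swap_inv[of "fst p" I "snd p" "\<lambda>x. f x * (f x - f (sw p x))"] p assms(2)
      by (auto simp: OP_def)
    then have "(\<Sum>x\<in>X. f (sw p x) * (f (sw p x) - f x)) = (\<Sum>x\<in>X. f x * (f x - f (sw p x)))" by simp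
    moreover have "(\<Sum>x\<in>X. (f x - f (sw p x))^2) = (\<Sum>x\<in>X. f x * (f x - f (sw p x))) + (\<Sum>x\<in>X. f (sw p x) * (f (sw p x) - f x))"
      by (simp add: sum.distrib[symmetric] power2_eq_square algebra_simps)
    ultimately show ?thesis by simp
  qed
  have "(\<Sum>x\<in>X. f x * (\<Sum>p\<in>OP I. f x - f (sw p x))) = (\<Sum>x\<in>X. \<Sum>p\<in>OP I. f x * (f x - f (sw p x)))"
    by (simp add: sum_distrib_left)
  also have "\<dots> = (\<Sum>p\<in>OP I. \<Sum>x\<in>X. f x * (f x - f (sw p x)))" by (rule sum.swap)
  also have "\<dots> = (\<Sum>p\<in>OP I. (\<Sum>x\<in>X. (f x - f (sw p x))^2) / 2)" by (rule sum.cong) (auto simp: one)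
  also have "\<dots> = (\<Sum>x\<in>X. \<Sum>p\<in>OP I. (f x - f (sw p x))^2) / 2"
    by (simp add: sum_divide_distrib[symmetric]) (rule sum.swap)
  finally show ?thesis by (simp add: DD_def)
qed

lemma single_coord:
  fixes \<phi> :: "real \<Rightarrow> real"
  assumes "finite I" "l \<in> I"
  shows "(\<Sum>p\<in>OP I. \<phi> (x l) - \<phi> (sw p x l)) = 2 * (\<Sum>j\<in>I - {l}. \<phi> (x l) - \<phi> (x j))"
proof -
  define \<alpha> where "\<alpha> j = \<phi> (x l) - \<phi> (x j)" for j
  have fO: "finite (OP I)" using assms finite_OP by simp
  have t: "\<phi> (x l) - \<phi> (sw p x l) = (if fst p = l then \<alpha> (snd p) else 0) + (if snd p = l then \<alpha> (fst p) else 0)"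
    if "p \<in> OP I" for p using that by (auto simp: OP_def swapc_def \<alpha>_def)
  have A: "(\<Sum>p\<in>OP I. if fst p = l then \<alpha> (snd p) else 0) = (\<Sum>j\<in>I - {l}. \<alpha> j)"
  proof -
    have "(\<Sum>p\<in>OP I. if fst p = l then \<alpha> (snd p) else 0) = (\<Sum>p\<in>{p\<in>OP I. fst p = l}. \<alpha> (snd p))"
      by (simp add: sum.inter_filter[OF fO])
    also have "{p\<in>OP I. fst p = l} = (\<lambda>j. (l, j)) ` (I - {l})" using assms by (auto simp: OP_def)
    also have "(\<Sum>p\<in>(\<lambda>j. (l, j)) ` (I - {l}). \<alpha> (snd p)) = (\<Sum>j\<in>I - {l}. \<alpha> j)"
      by (subst sum.reindex) (auto simp: inj_on_def)
    finally show ?thesis .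
  qed
  have B: "(\<Sum>p\<in>OP I. if snd p = l then \<alpha> (fst p) else 0) = (\<Sum>j\<in>I - {l}. \<alpha> j)"
  proof -
    have "(\<Sum>p\<in>OP I. if snd p = l then \<alpha> (fst p) else 0) = (\<Sum>p\<in>{p\<in>OP I. snd p = l}. \<alpha> (fst p))"
      by (simp add: sum.inter_filter[OF fO])
    also have "{p\<in>OP I. snd p = l} = (\<lambda>j. (j, l)) ` (I - {l})" using assms by (auto simp: OP_def)
    also have "(\<Sum>p\<in>(\<lambda>j. (j, l)) ` (I - {l}). \<alpha> (fst p)) = (\<Sum>j\<in>I - {l}. \<alpha> j)"
      by (subst sum.reindex) (auto simp: inj_on_def)
    finally show ?thesis .
  qed
  have "(\<Sum>p\<in>OP I. \<phi> (x l) - \<phi> (sw p x l)) = (\<Sum>p\<in>OP I. (if fst p = l then \<alpha> (snd p) else 0) + (if snd p = l then \<alpha> (fst p) else 0))"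
    by (rule sum.cong) (auto simp: t)
  also have "\<dots> = 2 * (\<Sum>j\<in>I - {l}. \<alpha> j)" by (simp add: sum.distrib A B)
  finally show ?thesis by (simp add: \<alpha>_def)
qed


lemma sum_lap_zero:
  fixes f :: "(nat \<Rightarrow> real) \<Rightarrow> real"
  assumes "finite I" "X = MS I x0"
  shows "(\<Sum>x\<in>X. \<Sum>p\<in>OP I. f x - f (sw p x)) = 0"
proof -
  have "(\<Sum>x\<in>X. \<Sum>p\<in>OP I. f x - f (sw p x)) = (\<Sum>p\<in>OP I. \<Sum>x\<in>X. f x - f (sw p x))"
    by (rule sum.swap)
  also have "\<dots> = (\<Sum>p\<in>OP I. 0)"
  proof (rule sum.cong[OF refl])
    fix p assume p: "p \<in> OP I"
    have "(\<Sum>x\<in>X. f (sw p x)) = (\<Sum>x\<in>X. f x)"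
      using sum_swap_inv[of "fst p" I "snd p" f] p assms(2) by (auto simp: OP_def)
    then show "(\<Sum>x\<in>X. f x - f (sw p x)) = 0" by (subst sum_subtractf) simp
  qed
  finally show ?thesis by simp
qed

lemma forward:
  assumes "finite I" "card I \<ge> 3" "X = MS I x0"
    and L: "\<forall>x\<in>X. (\<Sum>p\<in>OP I. f x - f (sw p x)) = 2 * real (card I) * f x"
  shows "\<forall>x\<in>X. (\<Sum>l\<in>I. PL X l f x) = real (card I) / (real (card I) - 1) * f x"
proof -
  define N where "N = real (card I)"
  have N3: "N \<ge> 3" using assms(2) by (simp add: N_def)
  have fX: "finite X" using assms MS_finite by simp
  define U where "U = (\<Sum>x\<in>X. (f x)^2)"
  define S where "S = (\<Sum>l\<in>I. \<Sum>x\<in>X. (PL X l f x)^2)"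
  define g where "g x = (\<Sum>l\<in>I. PL X l f x)" for x
  define G where "G = (\<Sum>x\<in>X. (g x)^2)"
  define c where "c = N / (N - 1)"
  have c0: "c > 0" using N3 by (simp add: c_def)
  have "(\<Sum>x\<in>X. f x * (\<Sum>p\<in>OP I. f x - f (sw p x))) = (\<Sum>x\<in>X. 2 * N * (f x)^2)"
    by (rule sum.cong) (auto simp: L N_def power2_eq_square)
  moreover have "(\<Sum>x\<in>X. 2 * N * (f x)^2) = 2 * N * U" by (simp add: U_def sum_distrib_left)
  ultimately have DDv: "DD I X f = 4 * N * U"
    using sym_sum[OF assms(1,3), of f] by linarith
  have "(\<Sum>x\<in>X. 2 * N * f x) = 0"
    using sum_lap_zero[OF assms(1,3), of f] L by (simp add: N_def)
  then have sf: "(\<Sum>x\<in>X. f x) = 0" using N3 by (simp add: sum_distrib_left[symmetric])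
  have IH: "\<forall>l\<in>I. \<forall>x\<in>X. gapP (I - {l}) x f"
  proof (intro ballI)
    fix l x assume "l \<in> I"
    then have "card (I - {l}) \<ge> 2" using assms(1,2) by simp
    then show "gapP (I - {l}) x f" using gap assms(1) by simp
  qed
  have core: "4 * (N - 1) * (N * U - S) \<le> (N - 2) * DD I X f"
    using core_step[OF assms(1,3) IH] by (simp add: N_def U_def S_def)
  have "N * U \<le> (N - 1) * S"
  proof -
    have "4 * ((N - 1) * (N * U - S)) \<le> 4 * ((N - 2) * (N * U))" using core DDv by (simp add: algebra_simps)
    then have "(N - 1) * (N * U - S) \<le> (N - 2) * (N * U)" by simp
    then show ?thesis by (simp add: algebra_simps)
  qed
  then have cUS: "c * U \<le> S" using N3 by (simp add: c_def field_simps)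
  have g1: "(\<Sum>x\<in>X. f x * g x) = S"
    using gram(1)[OF assms(1) _ assms(3) sf] assms(2) by (simp add: S_def g_def)
  have g2: "G \<le> c * S"
    using gram(2)[OF assms(1) _ assms(3) sf] assms(2) by (simp add: S_def G_def g_def c_def N_def)
  have q: "(\<Sum>x\<in>X. (g x - c * f x)^2) = G - 2 * c * S + c^2 * U"
    unfolding quad_expand G_def U_def using g1 by simp
  have "G - 2 * c * S + c^2 * U \<le> c * (c * U - S)"
    using g2 by (simp add: power2_eq_square algebra_simps)
  also have "\<dots> \<le> 0" using c0 cUS by (simp add: mult_nonneg_nonpos)
  finally have "(\<Sum>x\<in>X. (g x - c * f x)^2) = 0"
    using q sum_nonneg[of X "\<lambda>x. (g x - c * f x)^2"] by simp
  then have "\<forall>x\<in>X. (g x - c * f x)^2 = 0" using fX by (simp add: sum_nonneg_eq_0_iff)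
  then show ?thesis by (simp add: g_def c_def N_def)
qed

lemma backward:
  assumes "finite I" "card I \<ge> 3" "X = MS I x0"
    and P: "\<forall>x\<in>X. (\<Sum>l\<in>I. PL X l f x) = real (card I) / (real (card I) - 1) * f x"
  shows "\<forall>x\<in>X. (\<Sum>p\<in>OP I. f x - f (sw p x)) = 2 * real (card I) * f x"
proof -
  define N where "N = real (card I)"
  have N3: "N \<ge> 3" using assms(2) by (simp add: N_def)
  have fX: "finite X" using assms MS_finite by simp
  have cX: "real (card X) > 0" using fX MS_refl[of x0 I] assms(3) by (auto simp: card_gt_0_iff)
  define a where "a = (N - 1) / N"
  define F where "F l = FL X l f" for l
  define g where "g x = (\<Sum>l\<in>I. F l (x l))" for x
  have fg: "f x = a * g x" if "x \<in> X" for x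
    using P that N3 by (simp add: g_def F_def PL_def a_def N_def field_simps)
  have "(\<Sum>x\<in>X. g x) = (\<Sum>l\<in>I. \<Sum>x\<in>X. PL X l f x)"
    unfolding g_def F_def PL_def by (rule sum.swap)
  also have "\<dots> = N * (\<Sum>x\<in>X. f x)" by (simp add: tower[OF fX] N_def)
  finally have sg: "(\<Sum>x\<in>X. g x) = N * (\<Sum>x\<in>X. f x)" .
  have "(\<Sum>x\<in>X. f x) = a * (\<Sum>x\<in>X. g x)" by (simp add: fg sum_distrib_left)
  then have "(\<Sum>x\<in>X. f x) = (N - 1) * (\<Sum>x\<in>X. f x)" using sg N3 by (simp add: a_def)
  then have sf: "(\<Sum>x\<in>X. f x) = 0" using N3 by (simp add: algebra_simps)
  have K0: "(\<Sum>c\<in>I. F l (x c)) = 0" if l: "l \<in> I" and x: "x \<in> X" for l x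
  proof -
    define K where "K = (\<Sum>c\<in>I. F l (x0 c))"
    have "(\<Sum>y\<in>X. \<Sum>c\<in>I. F l (y c)) = (\<Sum>y\<in>X. K)"
      by (rule sum.cong) (use K_const[OF assms(1)] assms(3) K_def in auto)
    then have "real (card X) * K = (\<Sum>c\<in>I. \<Sum>y\<in>X. F l (y c))" by (simp add: sum.swap[of _ I X])
    also have "\<dots> = (\<Sum>c\<in>I. \<Sum>y\<in>X. F l (y l))"
      by (rule sum.cong[OF refl]) (use coord_move[OF _ l] assms(3) in auto)
    also have "\<dots> = 0" using tower[OF fX, of l f] sf by (simp add: F_def PL_def)
    finally have "K = 0" using cX by simp
    then show ?thesis using K_const[OF assms(1)] assms(3) x K_def by simp
  qed
  show ?thesis
  proof
    fix x assume x: "x \<in> X"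
    have swX: "sw p x \<in> X" if "p \<in> OP I" for p
      using swap_MS[of "fst p" I "snd p" x x0] that x assms(3) by (auto simp: OP_def)
    have "(\<Sum>p\<in>OP I. f x - f (sw p x)) = a * (\<Sum>p\<in>OP I. g x - g (sw p x))"
      by (simp add: sum_distrib_left right_diff_distrib fg[OF x] fg[OF swX] cong: sum.cong)
    also have "(\<Sum>p\<in>OP I. g x - g (sw p x)) = (\<Sum>l\<in>I. \<Sum>p\<in>OP I. F l (x l) - F l (sw p x l))"
      unfolding g_def by (simp add: sum_subtractf[symmetric]) (rule sum.swap)
    also have "\<dots> = (\<Sum>l\<in>I. 2 * (N * F l (x l)))"
    proof (rule sum.cong[OF refl])
      fix l assume l: "l \<in> I"
      have "(\<Sum>p\<in>OP I. F l (x l) - F l (sw p x l)) = 2 * (\<Sum>j\<in>I - {l}. F l (x l) - F l (x j))"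
        by (rule single_coord[OF assms(1) l])
      also have "(\<Sum>j\<in>I - {l}. F l (x l) - F l (x j)) = (N - 1) * F l (x l) - (\<Sum>j\<in>I - {l}. F l (x j))"
        using assms(1,2) l by (simp add: sum_subtractf N_def of_nat_diff)
      also have "(\<Sum>j\<in>I - {l}. F l (x j)) = - F l (x l)"
        using sum.remove[OF assms(1) l, of "\<lambda>j. F l (x j)"] K0[OF l x] by simp
      finally show "(\<Sum>p\<in>OP I. F l (x l) - F l (sw p x l)) = 2 * (N * F l (x l))"
        by (simp add: algebra_simps)
    qed
    also have "\<dots> = 2 * N * g x" by (simp add: g_def sum_distrib_left mult.assoc)
    finally have "(\<Sum>p\<in>OP I. f x - f (sw p x)) = 2 * N * (a * g x)" by simp
    then show "(\<Sum>p\<in>OP I. f x - f (sw p x)) = 2 * real (card I) * f x"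
      by (simp add: fg[OF x] N_def)
  qed
qed



lemma swapc_comm: "swapc j i = swapc i j"
  by (rule ext)+ (simp add: swapc_def)

lemma swapc_eq_self: "swapc i j x = x \<longleftrightarrow> x i = x j"
  by (auto simp: swapc_def fun_eq_iff)

lemma swapc_diffset: "i \<noteq> j \<Longrightarrow> x i \<noteq> x j \<Longrightarrow> {k. swapc i j x k \<noteq> x k} = {i, j}"
  by (auto simp: swapc_def)

lemma lap_eq:
  fixes f :: "(nat \<Rightarrow> real) \<Rightarrow> real"
  shows "laplacian N f x = (\<Sum>p\<in>OP {0..<N}. f x - f (sw p x)) / 2"
proof -
  define Q where "Q = {p. fst p < snd p \<and> snd p < N \<and> x (fst p) \<noteq> x (snd p)}"
  define P where "P = {p. fst p < snd p \<and> snd p < N}"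
  have fP: "finite P" by (rule finite_subset[of _ "{0..<N} \<times> {0..<N}"]) (auto simp: P_def)
  have nb: "neighbours N x = (\<lambda>p. sw p x) ` Q"
  proof
    show "neighbours N x \<subseteq> (\<lambda>p. sw p x) ` Q"
    proof
      fix y assume "y \<in> neighbours N x"
      then obtain i j where ij: "y \<noteq> x" "i < j" "j < N" "y = swapc i j x" by (auto simp: neighbours_def)
      then have "x i \<noteq> x j" using swapc_eq_self by metis
      then have "(i, j) \<in> Q" using ij by (simp add: Q_def)
      then show "y \<in> (\<lambda>p. sw p x) ` Q" using ij by force
    qed
  next
    show "(\<lambda>p. sw p x) ` Q \<subseteq> neighbours N x"
    proof
      fix y assume "y \<in> (\<lambda>p. sw p x) ` Q"
      then obtain p where p: "p \<in> Q" "y = sw p x" by auto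
      then have "y \<noteq> x" using swapc_eq_self[of "fst p" "snd p" x] by (auto simp: Q_def)
      obtain i j where pij: "p = (i, j)" by fastforce
      then have "i < j" "j < N" "y = swapc i j x" using p by (auto simp: Q_def)
      then show "y \<in> neighbours N x" using \<open>y \<noteq> x\<close> unfolding neighbours_def by blast
    qed
  qed
  have inj: "inj_on (\<lambda>p. sw p x) Q"
  proof (rule inj_onI)
    fix p q assume pq: "p \<in> Q" "q \<in> Q" "sw p x = sw q x"
    have "{fst p, snd p} = {fst q, snd q}"
      using swapc_diffset[of "fst p" "snd p" x] swapc_diffset[of "fst q" "snd q" x] pq
      by (auto simp: Q_def)
    then show "p = q" using pq(1,2) by (auto simp: Q_def doubleton_eq_iff prod_eq_iff)
  qed
  have "laplacian N f x = (\<Sum>p\<in>Q. f x - f (sw p x))"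
    unfolding laplacian_def nb by (subst sum.reindex[OF inj]) simp
  also have "\<dots> = (\<Sum>p\<in>P. f x - f (sw p x))"
    by (rule sum.mono_neutral_left[OF fP]) (auto simp: Q_def P_def, metis swapc_eq_self)
  finally have L1: "laplacian N f x = (\<Sum>p\<in>P. f x - f (sw p x))" .
  have OPu: "OP {0..<N} = P \<union> prod.swap ` P" by (auto simp: OP_def P_def image_iff)
  have disj: "P \<inter> prod.swap ` P = {}" by (auto simp: P_def)
  have "(\<Sum>p\<in>OP {0..<N}. f x - f (sw p x)) = (\<Sum>p\<in>P. f x - f (sw p x)) + (\<Sum>p\<in>prod.swap ` P. f x - f (sw p x))"
    unfolding OPu by (rule sum.union_disjoint) (use fP disj in auto)
  also have "(\<Sum>p\<in>prod.swap ` P. f x - f (sw p x)) = (\<Sum>p\<in>P. f x - f (sw p x))"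
    by (subst sum.reindex) (auto simp: swapc_comm)
  finally show ?thesis using L1 by simp
qed

lemma ms_eq:
  assumes "x0 \<in> multislice N r e k"
  shows "multislice N r e k = MS {0..<N} x0"
proof
  have x0: "x0 \<in> {0..<N} \<rightarrow>\<^sub>E e ` {0..<r}" "\<forall>m<r. card {i \<in> {0..<N}. x0 i = e m} = k m"
    using assms by (auto simp: multislice_def)
  have cnt0: "card {i \<in> {0..<N}. y i = v} = 0" if "y \<in> {0..<N} \<rightarrow>\<^sub>E e ` {0..<r}" "v \<notin> e ` {0..<r}" for y v
  proof -
    have "{i \<in> {0..<N}. y i = v} = {}" using that by (auto simp: PiE_def Pi_def)
    then show ?thesis by simp
  qed
  show "multislice N r e k \<subseteq> MS {0..<N} x0"
  proof
    fix y assume y: "y \<in> multislice N r e k"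
    then have y1: "y \<in> {0..<N} \<rightarrow>\<^sub>E e ` {0..<r}" and y2: "\<forall>m<r. card {i \<in> {0..<N}. y i = e m} = k m"
      by (auto simp: multislice_def)
    have "card {i \<in> {0..<N}. y i = v} = card {i \<in> {0..<N}. x0 i = v}" for v
    proof (cases "v \<in> e ` {0..<r}")
      case True
      then obtain m where "m < r" "v = e m" by auto
      then show ?thesis using x0(2) y2 by simp
    next
      case False
      then show ?thesis by (simp only: cnt0[OF y1 False] cnt0[OF x0(1) False])
    qed
    moreover have "\<forall>i. i \<notin> {0..<N} \<longrightarrow> y i = x0 i" using y1 x0(1) by (auto simp: PiE_def extensional_def)
    ultimately show "y \<in> MS {0..<N} x0" by (simp add: MS_def)
  qed
next
  have x0: "x0 \<in> {0..<N} \<rightarrow>\<^sub>E e ` {0..<r}" "\<forall>m<r. card {i \<in> {0..<N}. x0 i = e m} = k m"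
    using assms by (auto simp: multislice_def)
  show "MS {0..<N} x0 \<subseteq> multislice N r e k"
  proof
    fix y assume y: "y \<in> MS {0..<N} x0"
    have v: "y i \<in> e ` {0..<r}" if "i \<in> {0..<N}" for i
      using MS_vals[OF _ y that] x0(1) by (auto simp: PiE_def Pi_def)
    have o: "y i = undefined" if "i \<notin> {0..<N}" for i
      using y that x0(1) by (auto simp: MS_def PiE_def extensional_def)
    have "y \<in> {0..<N} \<rightarrow>\<^sub>E e ` {0..<r}" using v o by (auto simp: PiE_def extensional_def)
    moreover have "\<forall>m<r. card {i \<in> {0..<N}. y i = e m} = k m" using y x0(2) by (simp add: MS_def)
    ultimately show "y \<in> multislice N r e k" by (simp add: multislice_def)
  qed
qed

lemma projP_eq:
  "projP N r e k f x = (1 / real N) * (\<Sum>l\<in>{0..<N}. PL (multislice N r e k) l f x)"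
  by (simp add: projP_def proj1_def PL_def FL_def Let_def atLeast0LessThan)

theorem mainTheorem8:
  fixes N r :: nat and e :: "nat \<Rightarrow> real" and k :: "nat \<Rightarrow> nat"
    and f :: "(nat \<Rightarrow> real) \<Rightarrow> real"
  assumes "N \<ge> 3" and "r \<ge> 2" and "inj_on e {0..<r}"
    and "\<forall>m<r. k m \<ge> 1" and "(\<Sum>m<r. k m) = N"
  shows "(\<forall>x \<in> multislice N r e k. laplacian N f x = real N * f x) \<longleftrightarrow>
         (\<forall>x \<in> multislice N r e k. projP N r e k f x = f x / (real N - 1))"
proof (cases "multislice N r e k = {}")
  case True
  then show ?thesis by simp
next
  case False
  then obtain x0 where x0: "x0 \<in> multislice N r e k" by blast
  define X where "X = multislice N r e k"
  have XM: "X = MS {0..<N} x0" using ms_eq[OF x0] X_def by simp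
  have cI: "card {0..<N} \<ge> 3" using assms(1) by simp
  have N1: "real N - 1 > 0" "real N > 0" using assms(1) by auto
  have eqL: "laplacian N f x = real N * f x \<longleftrightarrow>
      (\<Sum>p\<in>OP {0..<N}. f x - f (sw p x)) = 2 * real (card {0..<N}) * f x" for x
    by (simp add: lap_eq) linarith
  have eqP: "projP N r e k f x = f x / (real N - 1) \<longleftrightarrow>
      (\<Sum>l\<in>{0..<N}. PL X l f x) = real (card {0..<N}) / (real (card {0..<N}) - 1) * f x" for x
    using N1 by (simp add: projP_eq X_def field_simps)
  show ?thesis
    unfolding X_def[symmetric] eqL eqP
    using forward[OF _ cI XM, of f] backward[OF _ cI XM, of f] by blast
qed

end
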